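(* A real symmetric tensor $S\in\mathbb{R}^{n\times n\times n}$ of order 3 belongs to $\mathrm{OW}_n(\mathbb{R})$ if and only if its slices $S_1,\dots,S_n$ pairwise commute. In particular, the set of real symmetric tensors of order 3 and size $n$ admitting an orthogonal Waring decomposition is the zero set of a system of $n^2(n-1)^2/4$ polynomial equations of degree 2 in the $\binom{n+2}{3}$ independent entries of the tensor.
   Context: For a symmetric tensor $S$ (invariant under all permutations of its three indices), its $k$-th slice is the symmetric matrix $S_k=(S_{ijk})_{1\le i,j\le n}$. Identify $S$ with the cubic form $f(x)=\sum_{i,j,k}S_{ijk}x_ix_jx_k$. $\mathrm{OW}_n(\mathbb{R})$ is the set of cubic forms $f\in\mathbb{R}[x_1,\dots,x_n]_3$ that can be written $f(x)=g(Ax)$ where $A$ is a real orthogonal matrix ($A^TA=\mathrm{Id}$) and $g=\alpha_1x_1^3+\cdots+\alpha_nx_n^3$ with $\alpha_i\in\mathbb{R}$. *)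

theory Defs
  imports "HOL-Analysis.Analysis"
begin

definition sym_tensor :: "real^'n^'n^'n \<Rightarrow> bool" where
  "sym_tensor S \<longleftrightarrow> (\<forall>i j k. S$i$j$k = S$j$i$k \<and> S$i$j$k = S$i$k$j \<and> S$i$j$k = S$k$j$i)"

definition slice :: "real^'n^'n^'n \<Rightarrow> 'n \<Rightarrow> real^'n^'n" where
  "slice S k = (\<chi> i j. S$i$j$k)"

definition cubic_form :: "real^'n^'n^'n \<Rightarrow> real^'n \<Rightarrow> real" where
  "cubic_form S x = (\<Sum>i\<in>UNIV. \<Sum>j\<in>UNIV. \<Sum>k\<in>UNIV. S$i$j$k * x$i * x$j * x$k)"

definition OW :: "(real^'n \<Rightarrow> real) set" where
  "OW = {f. \<exists>A::real^'n^'n. \<exists>\<alpha>::'n \<Rightarrow> real. orthogonal_matrix A \<and>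
            (\<forall>x. f x = (\<Sum>i\<in>UNIV. \<alpha> i * ((A *v x)$i)^3))}"

end

theory Submission
  imports Defs
begin

definition tri :: "real^'n^'n^'n \<Rightarrow> real^'n \<Rightarrow> real^'n \<Rightarrow> real^'n \<Rightarrow> real" where
  "tri S x y z = (\<Sum>i\<in>UNIV. \<Sum>j\<in>UNIV. \<Sum>k\<in>UNIV. S$i$j$k * x$i * y$j * z$k)"

lemma cubic_tri: "cubic_form S x = tri S x x x"
  by (simp add: cubic_form_def tri_def)

lemma tri_inner: "tri S x y z = x \<bullet> (\<chi> i. \<Sum>j\<in>UNIV. \<Sum>k\<in>UNIV. S$i$j$k * y$j * z$k)"
  unfolding tri_def inner_vec_def by (simp add: sum_distrib_left mult_ac)

lemma tri_sum1: "tri S (\<Sum>p\<in>P. h p) y z = (\<Sum>p\<in>P. tri S (h p) y z)"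
  by (simp add: tri_inner inner_sum_left)

lemma tri_scale1: "tri S (c *\<^sub>R x) y z = c * tri S x y z"
  by (simp add: tri_inner)

lemma tri_add1: "tri S (x + x') y z = tri S x y z + tri S x' y z"
  by (simp add: tri_inner inner_add_left)

lemma tri_minus1: "tri S (- x) y z = - tri S x y z"
  by (simp add: tri_inner)

lemma tri_swap12: assumes "sym_tensor S" shows "tri S x y z = tri S y x z"
proof -
  have "tri S x y z = (\<Sum>j\<in>UNIV. \<Sum>i\<in>UNIV. \<Sum>k\<in>UNIV. S$i$j$k * x$i * y$j * z$k)"
    unfolding tri_def by (rule sum.swap)
  also have "\<dots> = tri S y x z" unfolding tri_def
  proof (intro sum.cong refl)
    fix i j k
    have "S$i$j$k = S$j$i$k" using assms unfolding sym_tensor_def by blast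
    then show "S$i$j$k * x$i * y$j * z$k = S$j$i$k * y$j * x$i * z$k" by (simp add: mult_ac)
  qed
  finally show ?thesis .
qed

lemma tri_swap13: assumes "sym_tensor S" shows "tri S x y z = tri S z y x"
proof -
  have "tri S x y z = (\<Sum>i\<in>UNIV. \<Sum>k\<in>UNIV. \<Sum>j\<in>UNIV. S$i$j$k * x$i * y$j * z$k)"
    unfolding tri_def by (intro sum.cong refl sum.swap)
  also have "\<dots> = (\<Sum>k\<in>UNIV. \<Sum>i\<in>UNIV. \<Sum>j\<in>UNIV. S$i$j$k * x$i * y$j * z$k)"
    by (rule sum.swap)
  also have "\<dots> = (\<Sum>k\<in>UNIV. \<Sum>j\<in>UNIV. \<Sum>i\<in>UNIV. S$i$j$k * x$i * y$j * z$k)"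
    by (intro sum.cong refl sum.swap)
  also have "\<dots> = tri S z y x" unfolding tri_def
  proof (intro sum.cong refl)
    fix i j k
    have "S$k$j$i = S$i$j$k" using assms unfolding sym_tensor_def by blast
    then show "S$k$j$i * x$k * y$j * z$i = S$i$j$k * z$i * y$j * x$k" by (simp add: mult_ac)
  qed
  finally show ?thesis .
qed

lemma tri_slice: "tri S x y z = (\<Sum>k\<in>UNIV. z$k * (x \<bullet> (slice S k *v y)))"
proof -
  have "tri S x y z = (\<Sum>i\<in>UNIV. \<Sum>k\<in>UNIV. \<Sum>j\<in>UNIV. S$i$j$k * x$i * y$j * z$k)"
    unfolding tri_def by (intro sum.cong refl sum.swap)
  also have "\<dots> = (\<Sum>k\<in>UNIV. \<Sum>i\<in>UNIV. \<Sum>j\<in>UNIV. S$i$j$k * x$i * y$j * z$k)"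
    by (rule sum.swap)
  also have "\<dots> = (\<Sum>k\<in>UNIV. z$k * (x \<bullet> (slice S k *v y)))"
    by (simp add: slice_def inner_vec_def matrix_vector_mult_def sum_distrib_left mult_ac)
  finally show ?thesis .
qed

lemma tri_add2: "sym_tensor S \<Longrightarrow> tri S x (y + y') z = tri S x y z + tri S x y' z"
  by (metis tri_add1 tri_swap12)
lemma tri_add3: "sym_tensor S \<Longrightarrow> tri S x y (z + z') = tri S x y z + tri S x y z'"
  by (metis tri_add1 tri_swap13)
lemma tri_minus2: "sym_tensor S \<Longrightarrow> tri S x (- y) z = - tri S x y z"
  by (metis tri_minus1 tri_swap12)
lemma tri_minus3: "sym_tensor S \<Longrightarrow> tri S x y (- z) = - tri S x y z"
  by (metis tri_minus1 tri_swap13)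
lemma tri_swap23: "sym_tensor S \<Longrightarrow> tri S x y z = tri S x z y"
  by (metis tri_swap12 tri_swap13)

lemma tri_axis: "tri S (axis i 1) (axis j 1) (axis k 1) = S$i$j$k"
proof -
  have h: "\<And>(a::real) P. a * (if P then 1 else 0) = (if P then a else 0)" by simp
  show ?thesis by (simp add: tri_def axis_def h)
qed

lemma tri_expand:
  assumes D: "sym_tensor D"
  shows "tri D (x+y) (x+y) (x+y) = tri D x x x + 3*tri D x x y + 3 * tri D x y y + tri D y y y"
proof -
  have s: "tri D x y x = tri D x x y" "tri D y x x = tri D x x y" "tri D y x y = tri D x y y"
       "tri D y y x = tri D x y y"
      using D tri_swap12 tri_swap13 tri_swap23 by metis+
  show ?thesis using s D by (simp add: tri_add1 tri_add2 tri_add3)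
qed

lemma polar:
  assumes D: "sym_tensor D" and z: "\<And>x. cubic_form D x = 0"
  shows "D = 0"
proof -
  have P: "tri D x y y = 0" for x y
  proof -
    have e1: "tri D (x+y) (x+y) (x+y) = tri D x x x + 3*tri D x x y + 3 * tri D x y y + tri D y y y"
      using D by (rule tri_expand)
    have e2: "tri D (x+ -y) (x+ -y) (x+ -y) = tri D x x x + 3*tri D x x (-y) + 3 * tri D x (-y) (-y) + tri D (-y) (-y) (-y)"
      using D by (rule tri_expand)
    have m: "tri D x x (-y) = - tri D x x y" "tri D x (-y) (-y) = tri D x y y" "tri D (-y) (-y) (-y) = - tri D y y y"
      using D by (simp_all add: tri_minus1 tri_minus2 tri_minus3)
    have a: "tri D (x+y) (x+y) (x+y) = 0" "tri D (x+ -y) (x+ -y) (x+ -y) = 0" "tri D x x x = 0" "tri D y y y = 0"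
      using z unfolding cubic_tri by blast+
    show ?thesis using e1 e2 m a by linarith
  qed
  have Q: "tri D x y w = 0" for x y w
  proof -
    have "tri D x (y+w) (y+w) = 0" by (rule P)
    then show ?thesis using P[of x y] P[of x w] tri_swap23[OF D, of x w y] D
      by (simp add: tri_add2 tri_add3)
  qed
  show ?thesis
    by (simp add: vec_eq_iff flip: tri_axis) (simp add: Q)
qed

lemma cubic_diff: "cubic_form (S - T) x = cubic_form S x - cubic_form T x"
  by (simp add: cubic_form_def algebra_simps sum_subtractf)

lemma sym_diff: "sym_tensor S \<Longrightarrow> sym_tensor T \<Longrightarrow> sym_tensor (S - T)"
  by (simp add: sym_tensor_def)

definition diagm :: "('n \<Rightarrow> real) \<Rightarrow> real^'n^'n" where
  "diagm d = (\<chi> p q. if p = q then d p else 0)"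

lemma diagm_mult: "diagm d ** diagm e = diagm (\<lambda>p. d p * e p)"
proof -
  have h: "\<And>(a::real) P b. (if P then a else 0) * b = (if P then a * b else 0)" by simp
  show ?thesis
    unfolding diagm_def matrix_matrix_mult_def by (simp add: vec_eq_iff h)
qed

lemma diagm_comm: "diagm d ** diagm e = diagm e ** diagm d"
  by (simp add: diagm_mult mult.commute)

lemma conj_diag_entry: "(transpose A ** diagm d ** A)$i$j = (\<Sum>p\<in>UNIV. A$p$i * d p * A$p$j)"
proof -
  have h: "\<And>(a::real) P b. a * (if P then b else 0) = (if P then a * b else 0)" by simp
  show ?thesis
    by (simp add: diagm_def matrix_matrix_mult_def transpose_def h sum_distrib_right)
qed

definition OWT :: "real^'n^'n \<Rightarrow> ('n \<Rightarrow> real) \<Rightarrow> real^'n^'n^'n" where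
  "OWT A \<alpha> = (\<chi> i j k. \<Sum>p\<in>UNIV. \<alpha> p * A$p$i * A$p$j * A$p$k)"

lemma OWT_sym: "sym_tensor (OWT A \<alpha>)"
  by (simp add: sym_tensor_def OWT_def mult_ac)

lemma OWT_slice: "slice (OWT A \<alpha>) k = transpose A ** diagm (\<lambda>p. \<alpha> p * A$p$k) ** A"
  by (simp add: vec_eq_iff slice_def OWT_def conj_diag_entry mult_ac)

lemma OWT_comm:
  fixes A :: "real^'n^'n"
  assumes "orthogonal_matrix A"
  shows "slice (OWT A \<alpha>) k ** slice (OWT A \<alpha>) l = slice (OWT A \<alpha>) l ** slice (OWT A \<alpha>) k"
proof -
  have AA: "A ** transpose A = mat 1" using assms by (simp add: orthogonal_matrix_def)
  have e: "(transpose A ** D ** A) ** (transpose A ** E ** A) = transpose A ** (D ** E) ** A" for D E :: "real^'n^'n"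
  proof -
    have "(transpose A ** D ** A) ** (transpose A ** E ** A) = transpose A ** D ** (A ** transpose A) ** E ** A"
      by (simp add: matrix_mul_assoc)
    also have "\<dots> = transpose A ** (D ** E) ** A" by (simp add: AA matrix_mul_assoc)
    finally show ?thesis .
  qed
  show ?thesis unfolding OWT_slice e by (simp add: diagm_comm)
qed

lemma cube_sum: "(\<Sum>i\<in>(UNIV::'n::finite set). a i)^3 = (\<Sum>i\<in>UNIV. \<Sum>j\<in>UNIV. \<Sum>k\<in>UNIV. a i * a j * (a k::real))"
  by (simp add: power3_eq_cube sum_product sum_distrib_left sum_distrib_right mult_ac)

lemma OWT_cubic: "cubic_form (OWT A \<alpha>) x = (\<Sum>p\<in>UNIV. \<alpha> p * ((A *v x)$p)^3)"
proof -
  have "cubic_form (OWT A \<alpha>) x = (\<Sum>i\<in>UNIV. \<Sum>j\<in>UNIV. \<Sum>k\<in>UNIV. \<Sum>p\<in>UNIV. \<alpha> p * (A$p$i * x$i) * (A$p$j * x$j) * (A$p$k * x$k))"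
    by (simp add: cubic_form_def OWT_def sum_distrib_right sum_distrib_left mult_ac)
  also have "\<dots> = (\<Sum>i\<in>UNIV. \<Sum>j\<in>UNIV. \<Sum>p\<in>UNIV. \<Sum>k\<in>UNIV. \<alpha> p * (A$p$i * x$i) * (A$p$j * x$j) * (A$p$k * x$k))"
    by (intro sum.cong refl sum.swap)
  also have "\<dots> = (\<Sum>i\<in>UNIV. \<Sum>p\<in>UNIV. \<Sum>j\<in>UNIV. \<Sum>k\<in>UNIV. \<alpha> p * (A$p$i * x$i) * (A$p$j * x$j) * (A$p$k * x$k))"
    by (intro sum.cong refl sum.swap)
  also have "\<dots> = (\<Sum>p\<in>UNIV. \<Sum>i\<in>UNIV. \<Sum>j\<in>UNIV. \<Sum>k\<in>UNIV. \<alpha> p * (A$p$i * x$i) * (A$p$j * x$j) * (A$p$k * x$k))"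
    by (rule sum.swap)
  also have "\<dots> = (\<Sum>p\<in>UNIV. \<alpha> p * ((A *v x)$p)^3)"
    by (simp add: matrix_vector_mult_def cube_sum sum_distrib_left mult_ac)
  finally show ?thesis .
qed

lemma OW_imp_comm:
  assumes S: "sym_tensor S" and "cubic_form S \<in> OW"
  shows "slice S k ** slice S l = slice S l ** slice S k"
proof -
  obtain A \<alpha> where A: "orthogonal_matrix A" and f: "\<And>x. cubic_form S x = (\<Sum>i\<in>UNIV. \<alpha> i * ((A *v x)$i)^3)"
    using assms(2) unfolding OW_def by blast
  have "S - OWT A \<alpha> = 0"
    by (rule polar) (simp_all add: sym_diff S OWT_sym cubic_diff f OWT_cubic)
  then have "S = OWT A \<alpha>" by simp
  then show ?thesis using OWT_comm[OF A] by simp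
qed

lemma sym_inner:
  fixes M :: "real^'n^'n"
  assumes "transpose M = M"
  shows "x \<bullet> (M *v y) = (M *v x) \<bullet> y"
proof -
  have "(M *v x) \<bullet> y = (transpose M *v x) \<bullet> y" using assms by simp
  also have "\<dots> = x \<bullet> (M *v y)" by (simp add: dot_lmul_matrix)
  finally show ?thesis by simp
qed

lemma eigvec:
  fixes M :: "real^'n^'n"
  assumes sym: "transpose M = M" and V: "subspace V" and ne: "V \<noteq> {0}"
    and inv: "\<forall>v\<in>V. M *v v \<in> V"
  shows "\<exists>x\<in>V. x \<noteq> 0 \<and> (\<exists>\<mu>. M *v x = \<mu> *\<^sub>R x)"
proof -
  define K where "K = sphere (0::real^'n) 1 \<inter> V"
  define q where "q = (\<lambda>x::real^'n. x \<bullet> (M *v x))"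
  have cK: "compact K" unfolding K_def using V by (intro compact_Int_closed compact_sphere closed_subspace)
  obtain v where v: "v \<in> V" "v \<noteq> 0" using ne V subspace_0 by blast
  have "v /\<^sub>R norm v \<in> K" unfolding K_def using v V by (simp add: subspace_scale)
  then have neK: "K \<noteq> {}" by blast
  have cq: "continuous_on K q" unfolding q_def by (intro continuous_intros)
  obtain x where xK: "x \<in> K" and xmax: "\<And>y. y \<in> K \<Longrightarrow> q y \<le> q x"
    using continuous_attains_sup[OF cK neK cq] by blast
  have xV: "x \<in> V" and nx: "norm x = 1" using xK unfolding K_def by auto
  have xx: "x \<bullet> x = 1" using nx by (simp add: norm_eq_1)
  define lam where "lam = q x"
  have qscale: "q (c *\<^sub>R w) = c^2 * q w" for c w
    unfolding q_def by (simp add: matrix_vector_mult_scaleR power2_eq_square)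
  have bound: "q w \<le> lam * (w \<bullet> w)" if "w \<in> V" for w
  proof (cases "w = 0")
    case True then show ?thesis by (simp add: q_def)
  next
    case False
    then have nw: "norm w > 0" by simp
    have "w /\<^sub>R norm w \<in> K" unfolding K_def using that V False by (simp add: subspace_scale)
    then have "q (w /\<^sub>R norm w) \<le> lam" using xmax lam_def by blast
    moreover have "q (w /\<^sub>R norm w) = q w / (norm w)^2"
      using qscale[of "inverse (norm w)" w] by (simp add: power_inverse divide_inverse mult.commute)
    ultimately have "q w \<le> lam * (norm w)^2" using nw by (simp add: divide_le_eq mult.commute)
    then show ?thesis by (simp add: power2_norm_eq_inner)
  qed
  define y where "y = M *v x - lam *\<^sub>R x"
  have yV: "y \<in> V" unfolding y_def using xV inv V by (simp add: subspace_diff subspace_scale)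
  have xy: "x \<bullet> y = 0" unfolding y_def using xx by (simp add: inner_diff_right lam_def q_def)
  have yMx: "y \<bullet> (M *v x) = y \<bullet> y"
  proof -
    have "M *v x = y + lam *\<^sub>R x" unfolding y_def by simp
    then have "y \<bullet> (M *v x) = y \<bullet> y + lam * (y \<bullet> x)" by (simp add: inner_add_right)
    then show ?thesis using xy by (simp add: inner_commute)
  qed
  have y0: "y = 0"
  proof (rule ccontr)
    assume "y \<noteq> 0"
    define ny where "ny = y \<bullet> y"
    have nypos: "ny > 0" unfolding ny_def using \<open>y \<noteq> 0\<close> by simp
    define C where "C = lam * ny - q y"
    define t where "t = ny / (\<bar>C\<bar> + 1)"
    have tpos: "t > 0" unfolding t_def using nypos by simp
    have tC: "t * (\<bar>C\<bar> + 1) = ny" unfolding t_def by simp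
    have "x + t *\<^sub>R y \<in> V" using xV yV V by (simp add: subspace_add subspace_scale)
    then have I: "q (x + t *\<^sub>R y) \<le> lam * ((x + t *\<^sub>R y) \<bullet> (x + t *\<^sub>R y))" by (rule bound)
    have e1: "q (x + t *\<^sub>R y) = lam + 2 * t * ny + t^2 * q y"
    proof -
      have "x \<bullet> (M *v y) = y \<bullet> (M *v x)" using sym_inner[OF sym, of x y] by (simp add: inner_commute)
      then show ?thesis unfolding q_def lam_def ny_def using yMx
        by (simp add: matrix_vector_right_distrib matrix_vector_mult_scaleR inner_add_left inner_add_right
            power2_eq_square algebra_simps)
    qed
    have e2: "(x + t *\<^sub>R y) \<bullet> (x + t *\<^sub>R y) = 1 + t^2 * ny"
      using xx xy unfolding ny_def by (simp add: inner_add_left inner_add_right inner_commute power2_eq_square)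
    have I': "lam + 2 * t * ny + t^2 * q y \<le> lam * (1 + t^2 * ny)" using I by (simp only: e1 e2)
    have "2 * t * ny \<le> t^2 * C" using I' unfolding C_def by (simp add: algebra_simps)
    then have "t * (2 * ny) \<le> t * (t * C)" by (simp add: power2_eq_square algebra_simps)
    then have "2 * ny \<le> t * C" using tpos by simp
    moreover have "t * C \<le> t * \<bar>C\<bar>" using tpos by (simp add: mult_left_mono)
    moreover have "t * \<bar>C\<bar> + t = ny" using tC by (simp add: algebra_simps)
    ultimately show False using tpos nypos by linarith
  qed
  have "M *v x = lam *\<^sub>R x" using y0 unfolding y_def by simp
  moreover have "x \<noteq> 0" using nx by auto
  ultimately show ?thesis using xV by blast
qed

lemma common_eig:
  fixes F :: "'k \<Rightarrow> real^'n^'n"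
  assumes sym: "\<And>k. transpose (F k) = F k" and comm: "\<And>k l. F k ** F l = F l ** F k"
  shows "subspace V \<Longrightarrow> V \<noteq> {0} \<Longrightarrow> \<forall>k. \<forall>v\<in>V. F k *v v \<in> V \<Longrightarrow>
    \<exists>x\<in>V. x \<noteq> 0 \<and> (\<forall>k. \<exists>\<mu>. F k *v x = \<mu> *\<^sub>R x)"
proof (induction "dim V" arbitrary: V rule: less_induct)
  case less
  show ?case
  proof (cases "\<forall>k. \<exists>\<mu>. \<forall>v\<in>V. F k *v v = \<mu> *\<^sub>R v")
    case True
    obtain v where v: "v \<in> V" "v \<noteq> 0" using less.prems subspace_0 by blast
    show ?thesis using True v by blast
  next
    case False
    then obtain k where k: "\<And>\<mu>. \<exists>v\<in>V. F k *v v \<noteq> \<mu> *\<^sub>R v" by blast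
    obtain x \<mu> where x: "x \<in> V" "x \<noteq> 0" "F k *v x = \<mu> *\<^sub>R x"
      using eigvec[OF sym less.prems(1,2)] less.prems(3) by blast
    define W where "W = {v\<in>V. F k *v v = \<mu> *\<^sub>R v}"
    have WV: "W \<subseteq> V" unfolding W_def by blast
    have sW: "subspace W"
      using less.prems(1) unfolding W_def subspace_def
      by (auto simp: matrix_vector_right_distrib matrix_vector_mult_scaleR scaleR_add_right)
    have Wne: "W \<noteq> {0}" using x unfolding W_def by blast
    have Winv: "\<forall>l. \<forall>v\<in>W. F l *v v \<in> W"
    proof (intro allI ballI)
      fix l v assume v: "v \<in> W"
      have "F l *v v \<in> V" using v less.prems(3) WV by blast
      moreover have "F k *v (F l *v v) = \<mu> *\<^sub>R (F l *v v)"
      proof -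
        have "F k *v (F l *v v) = F l *v (F k *v v)" by (simp add: matrix_vector_mul_assoc comm)
        also have "\<dots> = \<mu> *\<^sub>R (F l *v v)" using v unfolding W_def by (simp add: matrix_vector_mult_scaleR)
        finally show ?thesis .
      qed
      ultimately show "F l *v v \<in> W" unfolding W_def by blast
    qed
    obtain v where "v \<in> V" "F k *v v \<noteq> \<mu> *\<^sub>R v" using k by blast
    then have "v \<notin> W" unfolding W_def by blast
    then have "W \<subset> V" using WV \<open>v \<in> V\<close> by blast
    then have "dim W < dim V" using sW less.prems(1) by (metis dim_psubset span_eq_iff)
    then obtain y where "y \<in> W" "y \<noteq> 0" "\<forall>k. \<exists>\<mu>. F k *v y = \<mu> *\<^sub>R y"
      using less.hyps[OF _ sW Wne Winv] by blast
    then show ?thesis using WV by blast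
  qed
qed

lemma common_onb:
  fixes F :: "'k \<Rightarrow> real^'n^'n"
  assumes sym: "\<And>k. transpose (F k) = F k" and comm: "\<And>k l. F k ** F l = F l ** F k"
  shows "subspace V \<Longrightarrow> \<forall>k. \<forall>v\<in>V. F k *v v \<in> V \<Longrightarrow>
    \<exists>B. B \<subseteq> V \<and> span B = V \<and> pairwise orthogonal B \<and>
       (\<forall>b\<in>B. norm b = 1 \<and> (\<forall>k. \<exists>\<mu>. F k *v b = \<mu> *\<^sub>R b))"
proof (induction "dim V" arbitrary: V rule: less_induct)
  case less
  show ?case
  proof (cases "V = {0}")
    case True
    then show ?thesis by (intro exI[of _ "{}"]) auto
  next
    case False
    obtain x where x: "x \<in> V" "x \<noteq> 0" "\<forall>k. \<exists>\<mu>. F k *v x = \<mu> *\<^sub>R x"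
      using common_eig[OF sym comm less.prems(1) False less.prems(2)] by blast
    define u where "u = x /\<^sub>R norm x"
    have uV: "u \<in> V" unfolding u_def using x less.prems(1) by (simp add: subspace_scale)
    have nu: "norm u = 1" unfolding u_def using x by simp
    have uu: "u \<bullet> u = 1" using nu by (simp add: norm_eq_1)
    have ueig: "\<forall>k. \<exists>\<mu>. F k *v u = \<mu> *\<^sub>R u"
    proof
      fix k obtain \<mu> where "F k *v x = \<mu> *\<^sub>R x" using x by blast
      then have "F k *v u = \<mu> *\<^sub>R u" unfolding u_def by (simp add: matrix_vector_mult_scaleR)
      then show "\<exists>\<mu>. F k *v u = \<mu> *\<^sub>R u" by blast
    qed
    define W where "W = {v\<in>V. u \<bullet> v = 0}"
    have WV: "W \<subseteq> V" unfolding W_def by blast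
    have sW: "subspace W"
      using less.prems(1) unfolding W_def subspace_def
      by (auto simp: inner_add_right)
    have Winv: "\<forall>l. \<forall>v\<in>W. F l *v v \<in> W"
    proof (intro allI ballI)
      fix l v assume v: "v \<in> W"
      have "F l *v v \<in> V" using v less.prems(2) WV by blast
      moreover have "u \<bullet> (F l *v v) = 0"
      proof -
        obtain \<mu> where m: "F l *v u = \<mu> *\<^sub>R u" using ueig by blast
        have "u \<bullet> (F l *v v) = (F l *v u) \<bullet> v" by (rule sym_inner[OF sym])
        also have "\<dots> = 0" using v m unfolding W_def by simp
        finally show ?thesis .
      qed
      ultimately show "F l *v v \<in> W" unfolding W_def by blast
    qed
    have "u \<notin> W" unfolding W_def using uu by simp
    then have "W \<subset> V" using WV uV by blast
    then have "dim W < dim V" using sW less.prems(1) by (metis dim_psubset span_eq_iff)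
    then obtain B where B: "B \<subseteq> W" "span B = W" "pairwise orthogonal B"
        "\<forall>b\<in>B. norm b = 1 \<and> (\<forall>k. \<exists>\<mu>. F k *v b = \<mu> *\<^sub>R b)"
      using less.hyps[OF _ sW Winv] by blast
    have "insert u B \<subseteq> V" using B(1) WV uV by blast
    moreover have "span (insert u B) = V"
    proof
      show "span (insert u B) \<subseteq> V" using \<open>insert u B \<subseteq> V\<close> less.prems(1) by (rule span_minimal)
      show "V \<subseteq> span (insert u B)"
      proof
        fix v assume v: "v \<in> V"
        have "v - (u \<bullet> v) *\<^sub>R u \<in> W" unfolding W_def using v uV less.prems(1) uu
          by (simp add: subspace_diff subspace_scale inner_diff_right)
        then have "v - (u \<bullet> v) *\<^sub>R u \<in> span (insert u B)" using B(2) span_mono[of B "insert u B"] by blast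
        moreover have "(u \<bullet> v) *\<^sub>R u \<in> span (insert u B)" by (simp add: span_base span_scale)
        ultimately have "(v - (u \<bullet> v) *\<^sub>R u) + (u \<bullet> v) *\<^sub>R u \<in> span (insert u B)" by (rule span_add)
        then show "v \<in> span (insert u B)" by simp
      qed
    qed
    moreover have "pairwise orthogonal (insert u B)"
      using B(1,3) unfolding pairwise_insert W_def orthogonal_def by (auto simp: inner_commute)
    moreover have "\<forall>b\<in>insert u B. norm b = 1 \<and> (\<forall>k. \<exists>\<mu>. F k *v b = \<mu> *\<^sub>R b)"
      using B(4) nu ueig by blast
    ultimately show ?thesis by blast
  qed
qed

lemma tri_sum2: "sym_tensor S \<Longrightarrow> tri S x (\<Sum>p\<in>P. h p) z = (\<Sum>p\<in>P. tri S x (h p) z)"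
  by (metis (no_types, lifting) sum.cong tri_sum1 tri_swap12)
lemma tri_scale2: "sym_tensor S \<Longrightarrow> tri S x (c *\<^sub>R y) z = c * tri S x y z"
  by (metis tri_scale1 tri_swap12)
lemma tri_sum3: "sym_tensor S \<Longrightarrow> tri S x y (\<Sum>p\<in>P. h p) = (\<Sum>p\<in>P. tri S x y (h p))"
  by (metis (no_types, lifting) sum.cong tri_sum1 tri_swap13)
lemma tri_scale3: "sym_tensor S \<Longrightarrow> tri S x y (c *\<^sub>R z) = c * tri S x y z"
  by (metis tri_scale1 tri_swap13)

lemma comm_imp_OW:
  fixes S :: "real^'n^'n^'n"
  assumes S: "sym_tensor S" and comm: "\<And>k l. slice S k ** slice S l = slice S l ** slice S k"
  shows "cubic_form S \<in> OW"
proof -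
  have symS: "transpose (slice S k) = slice S k" for k
    using S unfolding sym_tensor_def by (simp add: vec_eq_iff transpose_def slice_def)
  obtain B where B: "span B = UNIV" "pairwise orthogonal B"
      "\<forall>b\<in>B. norm b = 1 \<and> (\<forall>k. \<exists>\<mu>. slice S k *v b = \<mu> *\<^sub>R b)"
    using common_onb[of "slice S" UNIV, OF symS comm] by auto
  have "0 \<notin> B" using B(3) by force
  then have indB: "independent B" using B(2) pairwise_orthogonal_independent by blast
  then have finB: "finite B" using independent_bound by blast
  have "card B = dim (span B)" using indB dim_span_eq_card_independent by metis
  also have "\<dots> = CARD('n)" using B(1) by simp
  finally have cardB: "card B = CARD('n)" .
  obtain g where g: "bij_betw g (UNIV::'n set) B"
    using finite_same_card_bij[of "UNIV::'n set" B] finB cardB by auto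
  have gB: "g p \<in> B" for p using g by (auto simp: bij_betw_def)
  have ginj: "g p = g q \<Longrightarrow> p = q" for p q using g by (auto simp: bij_betw_def inj_def)
  have gn: "g p \<bullet> g p = 1" for p using B(3) gB[of p] by (simp add: norm_eq_1)
  have go: "p \<noteq> q \<Longrightarrow> g p \<bullet> g q = 0" for p q
    using B(2) gB[of p] gB[of q] ginj[of p q] unfolding pairwise_def orthogonal_def by blast
  have geig: "\<exists>\<mu>. slice S k *v g p = \<mu> *\<^sub>R g p" for k p using B(3) gB[of p] by blast
  define Q :: "real^'n^'n" where "Q = (\<chi> p. g p)"
  have Qp: "Q $ p = g p" for p unfolding Q_def by simp
  have rowQ: "row p Q = g p" for p by (simp add: row_def Qp vec_eq_iff)
  have orthQ: "orthogonal_matrix Q"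
    unfolding orthogonal_matrix_orthonormal_rows rowQ orthogonal_def
    using gn go by (simp add: norm_eq_1)
  define \<alpha> where "\<alpha> p = tri S (g p) (g p) (g p)" for p
  have t1: "tri S (g p) (g q) (g r) = 0" if "p \<noteq> q" for p q r
  proof -
    have "g p \<bullet> (slice S k *v g q) = 0" for k
    proof -
      obtain \<mu> where "slice S k *v g q = \<mu> *\<^sub>R g q" using geig by blast
      then show ?thesis using go[OF that] by simp
    qed
    then show ?thesis by (simp add: tri_slice)
  qed
  have t: "tri S (g p) (g q) (g r) = (if q = p \<and> r = p then \<alpha> p else 0)" for p q r
  proof (cases "p = q")
    case True
    show ?thesis
    proof (cases "q = r")
      case True then show ?thesis using \<open>p = q\<close> by (simp add: \<alpha>_def)
    next
      case False
      then have "tri S (g r) (g q) (g p) = 0" by (intro t1) auto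
      then show ?thesis using False tri_swap13[OF S, of "g p" "g q" "g r"] by auto
    qed
  next
    case False then show ?thesis using t1 by auto
  qed
  have "cubic_form S x = (\<Sum>p\<in>UNIV. \<alpha> p * ((Q *v x)$p)^3)" for x
  proof -
    define c where "c = Q *v x"
    have cp: "c $ p = g p \<bullet> x" for p unfolding c_def by (simp add: matrix_vector_mul_component Qp)
    have "x = transpose Q *v c" unfolding c_def using orthQ
      by (simp add: matrix_vector_mul_assoc orthogonal_matrix_def)
    also have "\<dots> = (\<Sum>p\<in>UNIV. c$p *\<^sub>R g p)"
      by (simp add: matrix_mult_sum scalar_mult_eq_scaleR rowQ)
    finally have xe: "x = (\<Sum>p\<in>UNIV. c$p *\<^sub>R g p)" .
    have "cubic_form S x = tri S x x x" by (rule cubic_tri)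
    also have "\<dots> = (\<Sum>p\<in>UNIV. c$p * (\<Sum>q\<in>UNIV. c$q * (\<Sum>r\<in>UNIV. c$r * tri S (g p) (g r) (g q))))"
      apply (subst (3) xe) apply (subst (2) xe) apply (subst (1) xe)
      by (simp add: S tri_sum1 tri_scale1 tri_sum2 tri_scale2 tri_sum3 tri_scale3 sum_distrib_left)
    also have "\<dots> = (\<Sum>p\<in>UNIV. \<alpha> p * c$p ^ 3)"
    proof (rule sum.cong[OF refl])
      fix p
      have h: "\<And>(a::real) P b. a * (if P then b else 0) = (if P then a * b else 0)" by simp
      have "(\<Sum>q\<in>UNIV. c$q * (\<Sum>r\<in>UNIV. c$r * tri S (g p) (g r) (g q)))
          = (\<Sum>q\<in>UNIV. if q = p then c$p * c$p * \<alpha> p else 0)"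
        by (intro sum.cong refl) (auto simp: t h)
      then show "c$p * (\<Sum>q\<in>UNIV. c$q * (\<Sum>r\<in>UNIV. c$r * tri S (g p) (g r) (g q))) = \<alpha> p * c$p ^ 3"
        by (simp add: power3_eq_cube mult_ac)
    qed
    finally show ?thesis unfolding c_def .
  qed
  then show ?thesis unfolding OW_def using orthQ by blast
qed

lemma card_pairs: "card {((i::'n::{finite,linorder}, j::'n), (k::'n, l::'n)). i < j \<and> k < l}
        = CARD('n)^2 * (CARD('n) - 1)^2 div 4"
proof -
  define P where "P = {(i::'n, j). i < j}"
  define P' where "P' = {(i::'n, j). j < i}"
  define D where "D = (\<lambda>i::'n. (i, i)) ` UNIV"
  have P'P: "P' = prod.swap ` P" unfolding P_def P'_def by auto
  have cP': "card P' = card P" unfolding P'P by (rule card_image) simp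
  have cD: "card D = CARD('n)" unfolding D_def by (rule card_image) (simp add: inj_def)
  have U: "(UNIV :: ('n \<times> 'n) set) = (P \<union> P') \<union> D"
    unfolding P_def P'_def D_def by (auto intro: linorder_cases)
  have "CARD('n) * CARD('n) = card (UNIV :: ('n \<times> 'n) set)" by (metis UNIV_Times_UNIV card_cartesian_product)
  also have "\<dots> = card (P \<union> P') + card D" unfolding U
    by (rule card_Un_disjoint) (auto simp: P_def P'_def D_def)
  also have "card (P \<union> P') = card P + card P'"
    by (rule card_Un_disjoint) (auto simp: P_def P'_def)
  finally have e: "CARD('n) * CARD('n) = 2 * card P + CARD('n)" using cP' cD by simp
  have e2: "CARD('n) * (CARD('n) - 1) = 2 * card P"
    using e by (simp add: right_diff_distrib')
  have "{((i::'n, j::'n), (k::'n, l::'n)). i < j \<and> k < l} = P \<times> P" unfolding P_def by auto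
  then have "card {((i::'n, j::'n), (k::'n, l::'n)). i < j \<and> k < l} = card P ^ 2"
    by (simp add: card_cartesian_product power2_eq_square)
  moreover have "CARD('n)^2 * (CARD('n) - 1)^2 = 4 * card P ^ 2"
  proof -
    have "CARD('n)^2 * (CARD('n) - 1)^2 = (CARD('n) * (CARD('n) - 1))^2" by (simp add: power_mult_distrib)
    also have "\<dots> = (2 * card P)^2" by (simp only: e2)
    also have "\<dots> = 4 * card P ^ 2" by (simp add: power_mult_distrib)
    finally show ?thesis .
  qed
  ultimately show ?thesis by simp
qed

definition Ecomm :: "real^'n^'n^'n \<Rightarrow> 'n \<Rightarrow> 'n \<Rightarrow> 'n \<Rightarrow> 'n \<Rightarrow> real" where
  "Ecomm S i j k l = (\<Sum>m\<in>UNIV. S$i$m$k * S$m$j$l - S$i$m$l * S$m$j$k)"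

lemma Ecomm_entry: "(slice S k ** slice S l)$i$j - (slice S l ** slice S k)$i$j = Ecomm S i j k l"
  by (simp add: Ecomm_def matrix_matrix_mult_def slice_def sum_subtractf)

lemma Ecomm_anti1: assumes "sym_tensor S" shows "Ecomm S j i k l = - Ecomm S i j k l"
proof -
  have "Ecomm S j i k l = (\<Sum>m\<in>UNIV. - (S$i$m$k * S$m$j$l - S$i$m$l * S$m$j$k))"
    unfolding Ecomm_def
  proof (intro sum.cong refl)
    fix m
    have "S$j$m$k = S$m$j$k" "S$m$i$l = S$i$m$l" "S$j$m$l = S$m$j$l" "S$m$i$k = S$i$m$k"
      using assms unfolding sym_tensor_def by blast+
    then show "S$j$m$k * S$m$i$l - S$j$m$l * S$m$i$k = - (S$i$m$k * S$m$j$l - S$i$m$l * S$m$j$k)"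
      by (simp add: algebra_simps)
  qed
  then show ?thesis unfolding Ecomm_def by (simp add: sum_negf sum_subtractf)
qed

lemma Ecomm_anti2: "Ecomm S i j l k = - Ecomm S i j k l"
  unfolding Ecomm_def by (simp add: sum_negf[symmetric] algebra_simps)

lemma comm_iff:
  fixes S :: "real^('n::{finite,linorder})^('n::{finite,linorder})^('n::{finite,linorder})"
  assumes S: "sym_tensor S"
  shows "(\<forall>k l. slice S k ** slice S l = slice S l ** slice S k) \<longleftrightarrow>
         (\<forall>i j k l. i < j \<and> k < l \<longrightarrow>
            (\<Sum>m\<in>UNIV. S$i$m$k * S$m$j$l - S$i$m$l * S$m$j$k) = 0)"
proof -
  have "(\<forall>k l. slice S k ** slice S l = slice S l ** slice S k) \<longleftrightarrow> (\<forall>i j k l. Ecomm S i j k l = 0)"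
    by (auto simp: vec_eq_iff simp flip: Ecomm_entry)
  also have "\<dots> \<longleftrightarrow> (\<forall>i j k l. i < j \<and> k < l \<longrightarrow> Ecomm S i j k l = 0)"
  proof
    assume "\<forall>i j k l. Ecomm S i j k l = 0" then show "\<forall>i j k l. i < j \<and> k < l \<longrightarrow> Ecomm S i j k l = 0" by blast
  next
    assume H: "\<forall>i j k l. i < j \<and> k < l \<longrightarrow> Ecomm S i j k l = 0"
    have H2: "Ecomm S i j k l = 0" if "i < j" for i j k l
    proof (cases k l rule: linorder_cases)
      case less then show ?thesis using H that by blast
    next
      case equal then show ?thesis by (simp add: Ecomm_def)
    next
      case greater then show ?thesis using H that Ecomm_anti2[of S i j l k] by auto
    qed
    show "\<forall>i j k l. Ecomm S i j k l = 0"
    proof (intro allI)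
      fix i j k l
      show "Ecomm S i j k l = 0"
      proof (cases i j rule: linorder_cases)
        case less then show ?thesis using H2 by blast
      next
        case equal then show ?thesis using Ecomm_anti1[OF S, of i i k l] by simp
      next
        case greater then show ?thesis using H2[of j i k l] Ecomm_anti1[OF S, of j i k l] by simp
      qed
    qed
  qed
  finally show ?thesis unfolding Ecomm_def .
qed

theorem theorem8:
  fixes S :: "real^('n::{finite,linorder})^('n::{finite,linorder})^('n::{finite,linorder})"
  assumes "sym_tensor S"
  shows "(cubic_form S \<in> OW \<longleftrightarrow> (\<forall>k l. slice S k ** slice S l = slice S l ** slice S k))
    \<and> (cubic_form S \<in> OW \<longleftrightarrow>
         (\<forall>i j k l. i < j \<and> k < l \<longrightarrow>
            (\<Sum>m\<in>UNIV. S$i$m$k * S$m$j$l - S$i$m$l * S$m$j$k) = 0))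
    \<and> card {((i::'n, j::'n), (k::'n, l::'n)). i < j \<and> k < l}
        = CARD('n)^2 * (CARD('n) - 1)^2 div 4"
proof -
  have 1: "cubic_form S \<in> OW \<longleftrightarrow> (\<forall>k l. slice S k ** slice S l = slice S l ** slice S k)"
    using OW_imp_comm[OF assms] comm_imp_OW[OF assms] by blast
  show ?thesis using 1 comm_iff[OF assms] card_pairs by simp
qed

end
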